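(* Let $k$ be a positive integer and let $c:\mathbb{Q}^{\beth_\omega}\to\{1,\dots,k\}$ be an arbitrary $k$-colouring. Let $\Pi$ be a finite set of patterns. Then there is a subset $A\subset B$ with $|A|=\aleph_1$ such that for each $\pi\in\Pi$ the set $$\{x\in\mathbb{Q}^{\beth_\omega}: x \text{ lies in the linear span of } A \text{ and has pattern } \pi\}$$ is monochromatic under $c$.
   Context: $\beth_\omega=\sup\{\aleph_0,2^{\aleph_0},2^{2^{\aleph_0}},\dots\}$. For a cardinal $\kappa$, $\mathbb{Q}^\kappa$ denotes the rational vector space of dimension $\kappa$, i.e. the direct sum (not product) of $\kappa$ copies of $\mathbb{Q}$, equipped with a basis $B=\{e_\alpha\}$ indexed by (and well-ordered by) the ordinals less than the least ordinal of cardinality $\kappa$. Every nonzero $x\in\mathbb{Q}^\kappa$ can be written uniquely as $x=\sum_{i=1}^n x_i e_{\alpha_i}$ with $n\ge1$, each $x_i$ a nonzero rational, and $\alpha_1<\alpha_2<\dots<\alpha_n$; the finite sequence $(x_1,x_2,\dots,x_n)$ is called the pattern of $x$, and $n$ is its length. A pattern is any finite nonempty sequence of nonzero rationals. *)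

theory Defs
  imports Main "HOL.Modules" "HOL-Library.Function_Algebras" "HOL-Library.Countable_Set"
begin

unbundle cardinal_syntax

fun is_beth :: "nat \<Rightarrow> 'a set \<Rightarrow> bool" where
  "is_beth 0 X = ( |X| =o |UNIV :: nat set| )"
| "is_beth (Suc n) X = (\<exists>Y :: 'a set. is_beth n Y \<and> |X| =o |Pow Y| )"

text \<open>The set I has cardinality beth_omega = sup of all beth_n:
  it is an upper bound of all beth_n, and it is below every upper bound
  (upper bounds are compared among subsets of I, which suffices since
  cardinals are linearly ordered).\<close>
definition has_card_beth_omega :: "'a set \<Rightarrow> bool" where
  "has_card_beth_omega I \<longleftrightarrow>
     (\<forall>n. \<exists>X \<subseteq> I. is_beth n X) \<and>
     (\<forall>J \<subseteq> I. (\<forall>n. \<exists>X :: 'a set. is_beth n X \<and> |X| \<le>o |J| ) \<longrightarrow> |I| \<le>o |J| )"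

definition has_card_aleph1 :: "'a set \<Rightarrow> bool" where
  "has_card_aleph1 S \<longleftrightarrow> uncountable S \<and>
     (\<forall>T :: 'a set. uncountable T \<longrightarrow> |S| \<le>o |T| )"

text \<open>Q^kappa as finitely supported functions from the index type to rat;
  scalar multiplication and standard basis vectors.\<close>
definition qscale :: "rat \<Rightarrow> ('i \<Rightarrow> rat) \<Rightarrow> ('i \<Rightarrow> rat)" where
  "qscale a x = (\<lambda>i. a * x i)"

definition basis_vec :: "'i \<Rightarrow> ('i \<Rightarrow> rat)" where
  "basis_vec \<alpha> = (\<lambda>i. if i = \<alpha> then 1 else 0)"

definition qvectors :: "('i \<Rightarrow> rat) set" where
  "qvectors = {x. finite {i. x i \<noteq> 0}}"

definition is_pattern :: "rat list \<Rightarrow> bool" where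
  "is_pattern \<pi> \<longleftrightarrow> \<pi> \<noteq> [] \<and> 0 \<notin> set \<pi>"

definition has_pattern :: "'i rel \<Rightarrow> ('i \<Rightarrow> rat) \<Rightarrow> rat list \<Rightarrow> bool" where
  "has_pattern r x \<pi> \<longleftrightarrow> x \<noteq> 0 \<and>
     (\<exists>as. sorted_wrt (\<lambda>a b. (a, b) \<in> r \<and> a \<noteq> b) as \<and>
           set as = {i. x i \<noteq> 0} \<and> \<pi> = map x as)"

end

theory Submission
  imports Defs "HOL-Library.Countable_Set_Type"
begin


locale wor =
  fixes r :: "'i rel"
  assumes WO: "well_order r"
begin

definition lt :: "'i \<Rightarrow> 'i \<Rightarrow> bool" where
  "lt a b \<longleftrightarrow> (a, b) \<in> r \<and> a \<noteq> b"

lemma lin: "linear_order r" using WO unfolding well_order_on_def by auto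

lemma wfR: "wf (r - Id)" using WO unfolding well_order_on_def by auto

lemma lt_irrefl[simp]: "\<not> lt a a" by (simp add: lt_def)

lemma lt_total: "a \<noteq> b \<Longrightarrow> lt a b \<or> lt b a"
  using lin unfolding linear_order_on_def total_on_def lt_def by auto

lemma lt_trans: "lt a b \<Longrightarrow> lt b c \<Longrightarrow> lt a c"
  using lin unfolding linear_order_on_def partial_order_on_def preorder_on_def antisym_def trans_def lt_def
  by blast

lemma lt_asym: "lt a b \<Longrightarrow> \<not> lt b a"
  using lt_trans lt_irrefl by blast

lemma lt_R: "lt a b \<longleftrightarrow> (a, b) \<in> r - Id" by (auto simp: lt_def)

lemma lt_induct: "(\<And>x. (\<And>y. lt y x \<Longrightarrow> P y) \<Longrightarrow> P x) \<Longrightarrow> P a"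
  by (metis wfR wf_induct lt_R)

lemma sorted_unique:
  "sorted_wrt lt as \<Longrightarrow> sorted_wrt lt bs \<Longrightarrow> set as = set bs \<Longrightarrow> as = bs"
proof (induction as arbitrary: bs)
  case Nil then show ?case by simp
next
  case (Cons a as)
  then obtain b bs' where bs: "bs = b # bs'" by (cases bs) auto
  have ab: "a = b"
  proof (rule ccontr)
    assume "a \<noteq> b"
    then have "a \<in> set bs'" "b \<in> set as" using Cons.prems bs by auto
    then have "lt b a" "lt a b" using Cons.prems bs by auto
    then show False using lt_asym by blast
  qed
  have "a \<notin> set as" using Cons.prems(1) by auto
  moreover have "b \<notin> set bs'" using Cons.prems(2) bs by auto
  ultimately have "set as = set bs'" using Cons.prems(3) bs ab by auto
  then show ?case using Cons bs ab by auto
qed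

lemma sorted_exists: "finite t \<Longrightarrow> \<exists>as. sorted_wrt lt as \<and> set as = t"
proof (induction rule: finite_induct)
  case empty then show ?case by auto
next
  case (insert x F)
  then obtain as where as: "sorted_wrt lt as" "set as = F" by auto
  let ?bs = "filter (\<lambda>a. lt a x) as @ x # filter (\<lambda>a. lt x a) as"
  have "sorted_wrt lt ?bs"
    using as by (auto simp: sorted_wrt_append sorted_wrt_filter intro: lt_trans)
  moreover have "set ?bs = insert x F"
    using as insert.hyps(2) lt_total by auto
  ultimately show ?case by blast
qed

definition sl :: "'i set \<Rightarrow> 'i list" where
  "sl t = (SOME as. sorted_wrt lt as \<and> set as = t)"

lemma sl: "finite t \<Longrightarrow> sorted_wrt lt (sl t) \<and> set (sl t) = t"
  unfolding sl_def by (rule someI_ex) (rule sorted_exists)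

lemma sl_eq: "sorted_wrt lt as \<Longrightarrow> sl (set as) = as"
  using sl[of "set as"] sorted_unique by auto

lemma sorted_distinct: "sorted_wrt lt as \<Longrightarrow> distinct as"
  by (induction as) auto

lemma max_exists: "finite t \<Longrightarrow> t \<noteq> {} \<Longrightarrow> \<exists>y\<in>t. \<forall>z\<in>t. z \<noteq> y \<longrightarrow> lt z y"
proof -
  assume "finite t" "t \<noteq> {}"
  then obtain as where as: "sorted_wrt lt as" "set as = t" using sorted_exists by blast
  then have ne: "as \<noteq> []" using \<open>t \<noteq> {}\<close> by auto
  then have "as = butlast as @ [last as]" by simp
  then have "sorted_wrt lt (butlast as @ [last as])" using as by simp
  then have "\<forall>z\<in>set (butlast as). lt z (last as)" by (simp add: sorted_wrt_append)
  moreover have "set as = insert (last as) (set (butlast as))"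
    using ne by (metis \<open>as = butlast as @ [last as]\<close> list.simps(15) set_append Un_commute insert_is_Un set_empty2 empty_set)
  ultimately show ?thesis using as by auto
qed

lemma min_exists: "finite t \<Longrightarrow> t \<noteq> {} \<Longrightarrow> \<exists>y\<in>t. \<forall>z\<in>t. z \<noteq> y \<longrightarrow> lt y z"
proof -
  assume "finite t" "t \<noteq> {}"
  then obtain as where as: "sorted_wrt lt as" "set as = t" using sorted_exists by blast
  then obtain a as' where "as = a # as'" using \<open>t \<noteq> {}\<close> by (cases as) auto
  then show ?thesis using as by auto
qed

end


context wor begin

definition ksub :: "'i set \<Rightarrow> nat \<Rightarrow> 'i set set" where
  "ksub A m = {s. s \<subseteq> A \<and> finite s \<and> card s = m}"

definition Fp :: "'i set \<Rightarrow> ('i set \<Rightarrow> 'c) \<Rightarrow> nat \<Rightarrow> 'i \<Rightarrow> ('i \<Rightarrow> bool) \<Rightarrow> 'i \<Rightarrow> bool" where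
  "Fp X f m x h y \<longleftrightarrow> y \<in> X \<and> lt y x \<and>
     (\<forall>s \<in> ksub {z. lt z y \<and> h z} m. f (insert y s) = f (insert x s))"

definition Pt :: "'i set \<Rightarrow> ('i set \<Rightarrow> 'c) \<Rightarrow> nat \<Rightarrow> 'i \<Rightarrow> 'i \<Rightarrow> bool" where
  "Pt X f m x = wfrec (r - Id) (Fp X f m x)"

lemma Pt_eq: "Pt X f m x y \<longleftrightarrow> y \<in> X \<and> lt y x \<and>
     (\<forall>s \<in> ksub {z. lt z y \<and> Pt X f m x z} m. f (insert y s) = f (insert x s))"
proof -
  have "adm_wf (r - Id) (Fp X f m x)"
    unfolding adm_wf_def Fp_def
  proof (intro allI impI)
    fix h g :: "'i \<Rightarrow> bool" and y
    assume "\<forall>z. (z, y) \<in> r - Id \<longrightarrow> h z = g z"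
    then have "{z. lt z y \<and> h z} = {z. lt z y \<and> g z}" by (auto simp: lt_R)
    then show "(y \<in> X \<and> lt y x \<and> (\<forall>s\<in>ksub {z. lt z y \<and> h z} m. f (insert y s) = f (insert x s))) =
               (y \<in> X \<and> lt y x \<and> (\<forall>s\<in>ksub {z. lt z y \<and> g z} m. f (insert y s) = f (insert x s)))"
      by simp
  qed
  note fp = wfrec_fixpoint[OF wfR this]
  have "Pt X f m x y = Fp X f m x (Pt X f m x) y"
    unfolding Pt_def by (subst fp) (rule refl)
  then show ?thesis by (simp add: Fp_def)
qed

abbreviation pr where "pr X f m x \<equiv> {y. Pt X f m x y}"

lemma pr_sub: "y \<in> pr X f m x \<Longrightarrow> y \<in> X \<and> lt y x"
  using Pt_eq[of X f m x y] by blast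

lemma coherent:
  assumes "y \<in> pr X f m x"
  shows "Pt X f m y z \<longleftrightarrow> Pt X f m x z \<and> lt z y"
proof (induction z rule: lt_induct)
  case (1 z)
  have yx: "lt y x" "y \<in> X" using pr_sub[OF assms] by auto
  have hy: "\<forall>s \<in> ksub {w. lt w y \<and> Pt X f m x w} m. f (insert y s) = f (insert x s)"
    using assms Pt_eq[of X f m x y] by blast
  show ?case
  proof (cases "lt z y")
    case True
    have eqs: "{w. lt w z \<and> Pt X f m y w} = {w. lt w z \<and> Pt X f m x w}"
      using 1 True lt_trans by blast
    have sub: "ksub {w. lt w z \<and> Pt X f m x w} m \<subseteq> ksub {w. lt w y \<and> Pt X f m x w} m"
      unfolding ksub_def using True lt_trans by blast
    show ?thesis
    proof
      assume "Pt X f m y z"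
      then have A: "z \<in> X" "\<forall>s \<in> ksub {w. lt w z \<and> Pt X f m x w} m. f (insert z s) = f (insert y s)"
        using Pt_eq[of X f m y z] eqs by auto
      have "\<forall>s \<in> ksub {w. lt w z \<and> Pt X f m x w} m. f (insert z s) = f (insert x s)"
        using A(2) hy sub by auto
      then show "Pt X f m x z \<and> lt z y"
        using Pt_eq[of X f m x z] A(1) True lt_trans[OF True yx(1)] by auto
    next
      assume "Pt X f m x z \<and> lt z y"
      then have A: "z \<in> X" "\<forall>s \<in> ksub {w. lt w z \<and> Pt X f m x w} m. f (insert z s) = f (insert x s)"
        using Pt_eq[of X f m x z] by auto
      have "\<forall>s \<in> ksub {w. lt w z \<and> Pt X f m x w} m. f (insert z s) = f (insert y s)"
        using A(2) hy sub by auto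
      then show "Pt X f m y z"
        using Pt_eq[of X f m y z] A(1) True eqs by auto
    qed
  next
    case False
    then show ?thesis using Pt_eq[of X f m y z] by auto
  qed
qed

lemma pr_mono: "y \<in> pr X f m x \<Longrightarrow> pr X f m y \<subseteq> pr X f m x"
  using coherent by blast

lemma node_unique:
  assumes "x \<in> X" "x' \<in> X" "pr X f m x = pr X f m x'"
    "\<forall>s \<in> ksub (pr X f m x) m. f (insert x s) = f (insert x' s)"
  shows "x = x'"
proof (rule ccontr)
  assume ne: "x \<noteq> x'"
  have key: "x = x'" if a: "x \<in> X" "x' \<in> X" "pr X f m x = pr X f m x'"
    "\<forall>s \<in> ksub (pr X f m x) m. f (insert x s) = f (insert x' s)" "lt x x'" for x x'
  proof -
    have "ksub {w. lt w x \<and> Pt X f m x' w} m \<subseteq> ksub (pr X f m x) m"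
      using a(3) unfolding ksub_def by auto
    then have "Pt X f m x' x" using Pt_eq[of X f m x' x] a by auto
    then have "Pt X f m x x" using a(3) by auto
    then show ?thesis using pr_sub[of x X f m x] by auto
  qed
  from lt_total[OF ne] show False
  proof
    assume "lt x x'" then show False using key[of x x'] assms ne by auto
  next
    assume "lt x' x" then show False using key[of x' x] assms ne by (auto simp: ksub_def)
  qed
qed

lemma end_homog:
  assumes "y \<in> pr X f m x" "s \<in> ksub (pr X f m x) m" "\<forall>z\<in>s. lt z y"
  shows "f (insert y s) = f (insert x s)"
proof -
  have "s \<in> ksub {z. lt z y \<and> Pt X f m x z} m" using assms unfolding ksub_def by auto
  then show ?thesis using assms(1) Pt_eq[of X f m x y] by auto
qed

end


context wor begin

definition ee :: "'i set \<Rightarrow> ('i set \<Rightarrow> 'c) \<Rightarrow> nat \<Rightarrow> 'j set \<Rightarrow> 'i \<Rightarrow> 'j" where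
  "ee X f m Y = wfrec (r - Id) (\<lambda>h y. SOME w. w \<in> Y \<and> w \<notin> h ` pr X f m y)"

lemma ee_eq: fixes Y :: "'j set" shows "ee X f m Y y = (SOME w. w \<in> Y \<and> w \<notin> ee X f m Y ` pr X f m y)"
proof -
  have "adm_wf (r - Id) (\<lambda>h y. SOME w. w \<in> Y \<and> w \<notin> h ` pr X f m y)"
    unfolding adm_wf_def
  proof (intro allI impI)
    fix h g :: "'i \<Rightarrow> 'j" and y
    assume "\<forall>z. (z, y) \<in> r - Id \<longrightarrow> h z = g z"
    then have "h ` pr X f m y = g ` pr X f m y" using pr_sub[of _ X f m y]
      by (auto simp: lt_R intro!: image_cong)
    then show "(SOME w. w \<in> Y \<and> w \<notin> h ` pr X f m y) = (SOME w. w \<in> Y \<and> w \<notin> g ` pr X f m y)"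
      by simp
  qed
  note fp = wfrec_fixpoint[OF wfR this]
  show ?thesis unfolding ee_def by (subst fp) (rule refl)
qed

definition BB where "BB X f m x = insert x (pr X f m x)"

lemma BB_sub: "x \<in> X \<Longrightarrow> BB X f m x \<subseteq> X"
  unfolding BB_def using pr_sub by blast

lemma BB_pr: "y \<in> BB X f m x \<Longrightarrow> pr X f m y \<subseteq> pr X f m x"
  unfolding BB_def using pr_mono by blast

lemma BB_lt: "a \<in> BB X f m x \<Longrightarrow> b \<in> BB X f m x \<Longrightarrow> lt a b \<Longrightarrow> a \<in> pr X f m b"
proof -
  assume a: "a \<in> BB X f m x" "b \<in> BB X f m x" "lt a b"
  show ?thesis
  proof (cases "b = x")
    case True
    then show ?thesis using a unfolding BB_def by auto
  next
    case False
    then have b: "b \<in> pr X f m x" using a unfolding BB_def by auto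
    then have "lt b x" using pr_sub by blast
    then have "a \<noteq> x" using a(3) lt_asym by blast
    then have "a \<in> pr X f m x" using a unfolding BB_def by auto
    then show ?thesis using coherent[OF b, of a] a(3) by auto
  qed
qed

lemma ee_good:
  fixes Y :: "'j set"
  assumes "y \<in> X" "|pr X f m y| <o |Y|"
  shows "ee X f m Y y \<in> Y \<and> ee X f m Y y \<notin> ee X f m Y ` pr X f m y"
proof -
  let ?E = "ee X f m Y ` pr X f m y"
  have "\<exists>w. w \<in> Y \<and> w \<notin> ?E"
  proof (rule ccontr)
    assume "\<nexists>w. w \<in> Y \<and> w \<notin> ?E"
    then have "Y \<subseteq> ?E" by auto
    then have "|Y| \<le>o |?E|" by (rule card_of_mono1)
    also have "|?E| \<le>o |pr X f m y|" by (rule card_of_image)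
    finally show False using assms(2) not_ordLess_ordLeq by blast
  qed
  then show ?thesis using ee_eq[of X f m Y y] by (metis (mono_tags, lifting) someI_ex)
qed

definition code :: "'i set \<Rightarrow> ('i set \<Rightarrow> 'c) \<Rightarrow> nat \<Rightarrow> 'j set \<Rightarrow> 'i \<Rightarrow> ('j \<times> 'j set \<times> 'j set \<times> 'c option) set" where
  "code X f m Y x =
    {(ee X f m Y y, ee X f m Y ` pr X f m y, ee X f m Y ` s, Some (f (insert y s))) | y s.
        y \<in> BB X f m x \<and> s \<in> ksub (pr X f m y) m} \<union>
    {(ee X f m Y y, ee X f m Y ` pr X f m y, {}, None) | y. y \<in> BB X f m x}"

lemma code_inj:
  fixes Y :: "'j set"
  assumes small: "\<forall>x\<in>X. |pr X f m x| <o |Y|"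
  shows "inj_on (code X f m Y) X"
proof (rule inj_onI)
  fix x x' assume x: "x \<in> X" and x': "x' \<in> X" and eqc: "code X f m Y x = code X f m Y x'"
  let ?e = "ee X f m Y"
  have good: "?e y \<notin> ?e ` pr X f m y" if "y \<in> X" for y
    using ee_good[OF that] small that by blast
  have inj: "inj_on ?e (BB X f m z)" if "z \<in> X" for z
  proof (rule inj_onI)
    fix a b assume ab: "a \<in> BB X f m z" "b \<in> BB X f m z" "?e a = ?e b"
    show "a = b"
    proof (rule ccontr)
      assume "a \<noteq> b"
      then consider "lt a b" | "lt b a" using lt_total by blast
      then show False
      proof cases
        case 1
        then have "a \<in> pr X f m b" using BB_lt ab by blast
        moreover have "b \<in> X" using ab BB_sub that by blast
        ultimately show False using good[of b] ab by (metis image_eqI mem_Collect_eq)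
      next
        case 2
        then have "b \<in> pr X f m a" using BB_lt ab by blast
        moreover have "a \<in> X" using ab BB_sub that by blast
        ultimately show False using good[of a] ab by (metis image_eqI mem_Collect_eq)
      qed
    qed
  qed
  have prsubBB: "pr X f m y \<subseteq> BB X f m z" if "y \<in> BB X f m z" for y z
    using BB_pr[OF that] unfolding BB_def by auto
  have main: "\<forall>y'. y \<in> BB X f m x \<longrightarrow> y' \<in> BB X f m x' \<longrightarrow> ?e y = ?e y' \<longrightarrow> y = y'" for y
  proof (induction y rule: lt_induct)
    case (1 y)
    show ?case
    proof (intro allI impI)
      fix y' assume y: "y \<in> BB X f m x" and y': "y' \<in> BB X f m x'" and eq: "?e y = ?e y'"
      have yX: "y \<in> X" and y'X: "y' \<in> X" using y y' BB_sub x x' by blast+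
      have "(?e y, ?e ` pr X f m y, {}, None) \<in> code X f m Y x"
        unfolding code_def using y by blast
      then have "(?e y, ?e ` pr X f m y, {}, None) \<in> code X f m Y x'" using eqc by simp
      then obtain y2 where y2: "y2 \<in> BB X f m x'" "?e y2 = ?e y" "?e ` pr X f m y2 = ?e ` pr X f m y"
        unfolding code_def by auto
      have "y2 = y'" using inj[OF x'] y2 y' eq by (auto dest: inj_onD)
      then have eimg: "?e ` pr X f m y = ?e ` pr X f m y'" using y2 by simp
      have prs: "pr X f m y = pr X f m y'"
      proof
        show "pr X f m y \<subseteq> pr X f m y'"
        proof
          fix z assume z: "z \<in> pr X f m y"
          then obtain z' where z': "z' \<in> pr X f m y'" "?e z = ?e z'" using eimg by (metis image_eqI imageE)
          have "lt z y" using z pr_sub by blast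
          moreover have "z \<in> BB X f m x" "z' \<in> BB X f m x'" using z z' prsubBB y y' by blast+
          ultimately have "z = z'" using 1 z'(2) by blast
          then show "z \<in> pr X f m y'" using z' by simp
        qed
      next
        show "pr X f m y' \<subseteq> pr X f m y"
        proof
          fix z' assume z': "z' \<in> pr X f m y'"
          then obtain z where z: "z \<in> pr X f m y" "?e z = ?e z'" using eimg by (metis image_eqI imageE)
          have "lt z y" using z pr_sub by blast
          moreover have "z \<in> BB X f m x" "z' \<in> BB X f m x'" using z z' prsubBB y y' by blast+
          ultimately have "z = z'" using 1 z(2) by blast
          then show "z' \<in> pr X f m y" using z by simp
        qed
      qed
      have types: "\<forall>s \<in> ksub (pr X f m y) m. f (insert y s) = f (insert y' s)"
      proof
        fix s assume s: "s \<in> ksub (pr X f m y) m"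
        have "(?e y, ?e ` pr X f m y, ?e ` s, Some (f (insert y s))) \<in> code X f m Y x"
          unfolding code_def using y s by blast
        then have "(?e y, ?e ` pr X f m y, ?e ` s, Some (f (insert y s))) \<in> code X f m Y x'" using eqc by simp
        then obtain y3 s3 where y3: "y3 \<in> BB X f m x'" "s3 \<in> ksub (pr X f m y3) m" "?e y3 = ?e y"
           "?e ` s3 = ?e ` s" "f (insert y3 s3) = f (insert y s)"
          unfolding code_def by auto
        have "y3 = y'" using inj[OF x'] y3 y' eq by (auto dest: inj_onD)
        have "inj_on ?e (pr X f m y')" using inj[OF x'] prsubBB[OF y'] inj_on_subset by blast
        moreover have "s3 \<subseteq> pr X f m y'" "s \<subseteq> pr X f m y'" using y3(2) s prs \<open>y3 = y'\<close> by (auto simp: ksub_def)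
        ultimately have "s3 = s" using y3(4) by (simp add: inj_on_image_eq_iff)
        then show "f (insert y s) = f (insert y' s)" using y3(5) \<open>y3 = y'\<close> by simp
      qed
      show "y = y'" using node_unique[OF yX y'X prs types] .
    qed
  qed
  have BBeq: "BB X f m x \<subseteq> BB X f m x'" if x: "x \<in> X" and x': "x' \<in> X"
     and eqc: "code X f m Y x = code X f m Y x'"
     and main: "\<And>y y'. y \<in> BB X f m x \<Longrightarrow> y' \<in> BB X f m x' \<Longrightarrow> ?e y = ?e y' \<Longrightarrow> y = y'" for x x'
  proof
    fix y assume y: "y \<in> BB X f m x"
    have "(?e y, ?e ` pr X f m y, {}, None) \<in> code X f m Y x"
      unfolding code_def using y by blast
    then have "(?e y, ?e ` pr X f m y, {}, None) \<in> code X f m Y x'" using eqc by simp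
    then obtain y2 where y2: "y2 \<in> BB X f m x'" "?e y2 = ?e y"
      unfolding code_def by auto
    then show "y \<in> BB X f m x'" using main[OF y y2(1)] by simp
  qed
  have "BB X f m x = BB X f m x'"
    using BBeq[OF x x' eqc] BBeq[OF x' x eqc[symmetric]] main by (metis subset_antisym)
  then have "x \<in> BB X f m x'" "x' \<in> BB X f m x" unfolding BB_def by auto
  then show "x = x'" unfolding BB_def using pr_sub lt_asym by blast
qed

end


lemma pow_mono_card: "|A| \<le>o |B| \<Longrightarrow> |Pow A| \<le>o |Pow B|"
proof -
  assume "|A| \<le>o |B|"
  then obtain g where g: "inj_on g A" "g ` A \<subseteq> B" using card_of_ordLeq[of A B] by blast
  have "inj_on (\<lambda>S. g ` S) (Pow A)"
    using g(1) by (metis PowD inj_onI inj_on_image_eq_iff)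
  moreover have "(\<lambda>S. g ` S) ` Pow A \<subseteq> Pow B" using g(2) by auto
  ultimately show ?thesis using card_of_ordLeq by blast
qed

lemma pow_cong_card: "|A| =o |B| \<Longrightarrow> |Pow A| =o |Pow B|"
  by (metis pow_mono_card ordIso_iff_ordLeq)

lemma times_le_inf:
  assumes "|A| \<le>o |P|" "|B| \<le>o |P|" "infinite P"
  shows "|A \<times> B| \<le>o |P|"
proof -
  obtain g where g: "inj_on g A" "g ` A \<subseteq> P" using card_of_ordLeq[of A P] assms(1) by blast
  obtain h where h: "inj_on h B" "h ` B \<subseteq> P" using card_of_ordLeq[of B P] assms(2) by blast
  have i: "inj_on (\<lambda>(a, b). (g a, h b)) (A \<times> B)"
    using g(1) h(1) unfolding inj_on_def by (auto split: prod.splits)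
  have "|A \<times> B| \<le>o |P \<times> P|"
    by (rule card_of_ordLeqI[OF i]) (use g(2) h(2) in \<open>auto simp: image_subset_iff\<close>)
  also have "|P \<times> P| =o |P|" by (rule card_of_Times_same_infinite[OF assms(3)])
  finally show ?thesis .
qed

lemma count_le_inf:
  assumes "countable A" "infinite P"
  shows "|A| \<le>o |P|"
proof -
  have "|A| \<le>o |UNIV :: nat set|" by (rule countable_card_of_nat[THEN iffD1, OF assms(1)])
  also have "|UNIV :: nat set| \<le>o |P|" by (rule infinite_iff_card_of_nat[THEN iffD1, OF assms(2)])
  finally show ?thesis .
qed

lemma code_space:
  fixes Y :: "'j set" and C :: "'c set"
  assumes "infinite Y" "finite C"
  shows "|Pow (Y \<times> Pow Y \<times> Pow Y \<times> insert None (Some ` C))| \<le>o |Pow (Pow Y)|"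
proof -
  let ?P = "Pow Y"
  have inf: "infinite ?P" using assms(1) by (meson finite_Pow_iff)
  have Y: "|Y| \<le>o |?P|" by (rule ordLess_imp_ordLeq[OF card_of_Pow])
  have P: "|?P| \<le>o |?P|" by (rule ordLeq_reflexive) (rule card_of_Card_order[unfolded card_order_on_def, THEN conjunct1])
  have Co: "|insert None (Some ` C)| \<le>o |?P|"
    by (rule count_le_inf[OF countable_finite inf]) (simp add: assms(2))
  have "|Y \<times> ?P \<times> ?P \<times> insert None (Some ` C)| \<le>o |?P|"
    using times_le_inf[OF Y times_le_inf[OF P times_le_inf[OF P Co inf] inf] inf] .
  then show ?thesis by (rule pow_mono_card)
qed

context wor begin

lemma count_bound:
  fixes Y :: "'j set" and C :: "'c set" and f :: "'i set \<Rightarrow> 'c"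
  assumes small: "\<forall>x\<in>X. |pr X f m x| <o |Y|"
    and col: "\<forall>t \<in> ksub X (Suc m). f t \<in> C"
  shows "|X| \<le>o |Pow (Y \<times> Pow Y \<times> Pow Y \<times> insert None (Some ` C))|"
proof -
  let ?e = "ee X f m Y"
  have eY: "?e y \<in> Y" if "y \<in> X" for y using ee_good[of y X f m Y] small that by blast
  have "code X f m Y x \<in> Pow (Y \<times> Pow Y \<times> Pow Y \<times> insert None (Some ` C))" if x: "x \<in> X" for x
  proof -
    have BX: "BB X f m x \<subseteq> X" using BB_sub[OF x] .
    have prX: "pr X f m y \<subseteq> X" for y using pr_sub by blast
    have "f (insert y s) \<in> C" if "y \<in> BB X f m x" "s \<in> ksub (pr X f m y) m" for y s
    proof -
      have "y \<notin> s" using that(2) pr_sub[of y X f m y] by (auto simp: ksub_def)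
      then have "insert y s \<in> ksub X (Suc m)" using that BX prX[of y] by (auto simp: ksub_def)
      then show ?thesis using col by blast
    qed
    moreover have "?e y \<in> Y" if "y \<in> BB X f m x" for y using eY BX that by blast
    moreover have "?e ` pr X f m y \<subseteq> Y" for y using eY prX by blast
    moreover have "?e ` s \<subseteq> Y" if "s \<in> ksub (pr X f m y) m" for y s
      using eY prX that unfolding ksub_def by blast
    ultimately show ?thesis unfolding code_def Pow_iff by blast

  qed
  then show ?thesis using card_of_ordLeqI[OF code_inj[OF small]] by blast
qed

end


lemma beth_inf: fixes Y :: "'a set" shows "is_beth n Y \<Longrightarrow> infinite Y"
proof (induction n arbitrary: Y)
  case 0
  then have "|Y| =o |UNIV :: nat set|" by simp
  then show ?case using card_of_ordIso_finite by fastforce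
next
  case (Suc n)
  then obtain Z :: "'a set" where Z: "is_beth n Z" "|Y| =o |Pow Z|" by auto
  then have "infinite (Pow Z)" using Suc.IH by simp
  then show ?case using card_of_ordIso_finite[OF Z(2)] by simp
qed

lemma beth_Suc_uncountable:
  fixes Y :: "'a set"
  assumes "is_beth (Suc n) Y" "|Y| \<le>o |X|"
  shows "uncountable X"
proof
  assume c: "countable X"
  obtain Z :: "'a set" where Z: "is_beth n Z" "|Y| =o |Pow Z|" using assms(1) by auto
  have "|UNIV :: nat set| \<le>o |Z|" by (rule infinite_iff_card_of_nat[THEN iffD1, OF beth_inf[OF Z(1)]])
  also have "|Z| <o |Pow Z|" by (rule card_of_Pow)
  also have "|Pow Z| =o |Y|" using Z(2) ordIso_symmetric by blast
  also have "|Y| \<le>o |X|" by (rule assms(2))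
  also have "|X| \<le>o |UNIV :: nat set|" by (rule countable_card_of_nat[THEN iffD1, OF c])
  finally show False using ordLess_irreflexive by blast
qed

context wor begin

lemma ramsey:
  "\<forall>X (f :: 'i set \<Rightarrow> 'c) C. finite C \<longrightarrow> (\<forall>t\<in>ksub X n. f t \<in> C) \<longrightarrow>
     (\<exists>Z :: 'i set. is_beth (3*n+1) Z \<and> |Z| \<le>o |X| ) \<longrightarrow>
     (\<exists>H\<subseteq>X. uncountable H \<and> (\<exists>c. \<forall>t\<in>ksub H n. f t = c))"
proof (induction n)
  case 0
  show ?case
  proof (intro allI impI)
    fix X :: "'i set" and f :: "'i set \<Rightarrow> 'c" and C :: "'c set"
    assume "\<exists>Z :: 'i set. is_beth (3*0+1) Z \<and> |Z| \<le>o |X|"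
    then obtain Z :: "'i set" where "is_beth (Suc 0) Z" "|Z| \<le>o |X|" by auto
    then have "uncountable X" using beth_Suc_uncountable by blast
    moreover have "\<forall>t\<in>ksub X 0. f t = f {}" by (auto simp: ksub_def)
    ultimately show "\<exists>H\<subseteq>X. uncountable H \<and> (\<exists>c. \<forall>t\<in>ksub H 0. f t = c)" by blast
  qed
next
  case (Suc n)
  show ?case
  proof (intro allI impI)
    fix X :: "'i set" and f :: "'i set \<Rightarrow> 'c" and C :: "'c set"
    assume fC: "finite C" and col: "\<forall>t\<in>ksub X (Suc n). f t \<in> C"
      and big: "\<exists>Z :: 'i set. is_beth (3 * Suc n + 1) Z \<and> |Z| \<le>o |X|"
    have e: "3 * Suc n + 1 = Suc (Suc (Suc (3 * n + 1)))" by simp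
    obtain Z :: "'i set" where Z: "is_beth (Suc (Suc (Suc (3 * n + 1)))) Z" "|Z| \<le>o |X|"
      using big unfolding e by blast
    obtain Z2 :: "'i set" where Z2: "is_beth (Suc (Suc (3 * n + 1))) Z2" "|Z| =o |Pow Z2|" using Z(1) by auto
    obtain Z1 :: "'i set" where Z1: "is_beth (Suc (3 * n + 1)) Z1" "|Z2| =o |Pow Z1|" using Z2(1) by auto
    obtain Y :: "'i set" where Y: "is_beth (3 * n + 1) Y" "|Z1| =o |Pow Y|" using Z1(1) by auto
    have Yinf: "infinite Y" using beth_inf[OF Y(1)] .
    have "\<exists>x\<in>X. \<not> |pr X f n x| <o |Y|"
    proof (rule ccontr)
      assume "\<not> (\<exists>x\<in>X. \<not> |pr X f n x| <o |Y| )"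
      then have small: "\<forall>x\<in>X. |pr X f n x| <o |Y|" by blast
      have "|X| \<le>o |Pow (Y \<times> Pow Y \<times> Pow Y \<times> insert None (Some ` C))|"
        by (rule count_bound[OF small col])
      also have "|Pow (Y \<times> Pow Y \<times> Pow Y \<times> insert None (Some ` C))| \<le>o |Pow (Pow Y)|"
        by (rule code_space[OF Yinf fC])
      also have "|Pow (Pow Y)| =o |Pow Z1|" by (rule pow_cong_card[OF ordIso_symmetric[OF Y(2)]])
      also have "|Pow Z1| =o |Z2|" by (rule ordIso_symmetric[OF Z1(2)])
      also have "|Z2| <o |Pow Z2|" by (rule card_of_Pow)
      also have "|Pow Z2| =o |Z|" by (rule ordIso_symmetric[OF Z2(2)])
      also have "|Z| \<le>o |X|" by (rule Z(2))
      finally show False using ordLess_irreflexive by blast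
    qed
    then obtain x where x: "x \<in> X" "\<not> |pr X f n x| <o |Y|" by blast
    have Ypr: "|Y| \<le>o |pr X f n x|"
      using x(2) not_ordLess_iff_ordLeq[OF card_of_Well_order card_of_Well_order] by blast
    let ?g = "\<lambda>s. f (insert x s)"
    have colg: "\<forall>s\<in>ksub (pr X f n x) n. ?g s \<in> C"
    proof
      fix s assume s: "s \<in> ksub (pr X f n x) n"
      have "x \<notin> s" using s pr_sub[of x X f n x] by (auto simp: ksub_def)
      then have "insert x s \<in> ksub X (Suc n)" using s x(1) pr_sub[of _ X f n x] by (auto simp: ksub_def)
      then show "?g s \<in> C" using col by blast
    qed
    obtain H c where H: "H \<subseteq> pr X f n x" "uncountable H" "\<forall>t\<in>ksub H n. ?g t = c"
      using Suc.IH[rule_format, of C "pr X f n x" ?g, OF fC colg[rule_format]] Y(1) Ypr by blast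
    have "\<forall>t\<in>ksub H (Suc n). f t = c"
    proof
      fix t assume t: "t \<in> ksub H (Suc n)"
      then have tf: "finite t" "t \<noteq> {}" "t \<subseteq> H" by (auto simp: ksub_def)
      obtain y where y: "y \<in> t" "\<forall>z\<in>t. z \<noteq> y \<longrightarrow> lt z y" using max_exists[OF tf(1,2)] by blast
      let ?s = "t - {y}"
      have sH: "?s \<in> ksub H n" using t y(1) by (auto simp: ksub_def)
      then have sP: "?s \<in> ksub (pr X f n x) n" using H(1) by (auto simp: ksub_def)
      have yP: "y \<in> pr X f n x" using y(1) tf(3) H(1) by blast
      have "f (insert y ?s) = f (insert x ?s)" by (rule end_homog[OF yP sP]) (use y in blast)
      also have "\<dots> = c" using H(3) sH by blast
      finally show "f t = c" using y(1) by (simp add: insert_absorb)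
    qed
    then show "\<exists>H\<subseteq>X. uncountable H \<and> (\<exists>c. \<forall>t\<in>ksub H (Suc n). f t = c)"
      using H(1,2) pr_sub[of _ X f n x] by blast
  qed
qed

end


interpretation qm: module qscale
  by unfold_locales (auto simp: qscale_def fun_eq_iff algebra_simps)

lemma span_supp:
  assumes "x \<in> module.span qscale (basis_vec ` S)" "j \<notin> S"
  shows "x j = 0"
proof -
  have "\<forall>j. j \<notin> S \<longrightarrow> x j = 0"
    using assms(1)
  proof (induction rule: qm.span_induct_alt)
    case base then show ?case by simp
  next
    case (step a v y)
    then obtain s where s: "s \<in> S" "v = basis_vec s" by blast
    have "v j = 0" if "j \<notin> S" for j using s that by (auto simp: basis_vec_def)
    then show ?case using step(2) by (simp add: qscale_def)
  qed
  then show ?thesis using assms(2) by blast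
qed

lemma aleph1_sub:
  fixes A :: "'i set"
  assumes "uncountable A"
  shows "\<exists>S\<subseteq>A. has_card_aleph1 S"
proof -
  let ?K = "{ |T| | T :: 'i set. uncountable T}"
  have "|A| \<in> ?K" using assms by blast
  obtain k where k: "k \<in> ?K" "\<And>y. (y, k) \<in> ordLess \<Longrightarrow> y \<notin> ?K"
    by (rule wfE_min[OF wf_ordLess \<open>|A| \<in> ?K\<close>]) blast
  then obtain T0 :: "'i set" where T0: "k = |T0|" "uncountable T0" by blast
  have minT: "|T0| \<le>o |T|" if "uncountable T" for T :: "'i set"
  proof -
    have "\<not> |T| <o |T0|" using k(2)[of "|T|"] that T0(1) by blast
    then show ?thesis using not_ordLess_iff_ordLeq[OF card_of_Well_order card_of_Well_order] by blast
  qed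
  obtain g where g: "inj_on g T0" "g ` T0 \<subseteq> A" using minT[OF assms] card_of_ordLeq[of T0 A] by blast
  have "uncountable (g ` T0)" using countable_image_inj_on g(1) T0(2) by blast
  moreover have "|g ` T0| \<le>o |T|" if "uncountable T" for T :: "'i set"
    using ordLeq_transitive[OF card_of_image minT[OF that]] .
  ultimately show ?thesis using g(2) unfolding has_card_aleph1_def by blast
qed

lemma map_of_zip_map: "map_of (zip as (map x as)) j = (if j \<in> set as then Some (x j) else None)"
  by (induction as) auto

context wor begin

definition vecof :: "rat list \<Rightarrow> 'i set \<Rightarrow> 'i \<Rightarrow> rat" where
  "vecof \<pi> t = (\<lambda>j. case map_of (zip (sl t) \<pi>) j of None \<Rightarrow> 0 | Some q \<Rightarrow> q)"

lemma vecof_q: "finite t \<Longrightarrow> vecof \<pi> t \<in> qvectors"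
proof -
  assume ft: "finite t"
  have "{j. vecof \<pi> t j \<noteq> 0} \<subseteq> set (sl t)"
  proof
    fix j assume "j \<in> {j. vecof \<pi> t j \<noteq> 0}"
    then obtain q where "map_of (zip (sl t) \<pi>) j = Some q"
      unfolding vecof_def by (auto split: option.splits)
    then have "(j, q) \<in> set (zip (sl t) \<pi>)" by (rule map_of_SomeD)
    then show "j \<in> set (sl t)" by (rule set_zip_leftD)
  qed
  then show ?thesis unfolding qvectors_def by (auto intro: finite_subset)
qed

lemma main:
  fixes c :: "('i \<Rightarrow> rat) \<Rightarrow> nat" and \<Pi> :: "rat list set"
  assumes beth: "\<forall>n. \<exists>X :: 'i set. is_beth n X"
    and col: "\<forall>x \<in> qvectors. c x \<in> {1..k}"
    and fin: "finite \<Pi>"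
    and pat: "\<forall>\<pi> \<in> \<Pi>. is_pattern \<pi>"
  shows "\<exists>S :: 'i set. has_card_aleph1 S \<and>
           (\<forall>\<pi> \<in> \<Pi>. \<exists>col. \<forall>x.
              x \<in> module.span qscale (basis_vec ` S) \<and> has_pattern r x \<pi> \<longrightarrow> c x = col)"
proof -
  define N where "N = Max (insert 0 (length ` \<Pi>))"
  have lenN: "length \<pi> \<le> N" if "\<pi> \<in> \<Pi>" for \<pi>
    unfolding N_def using fin that by (simp add: Max_ge_iff)
  define f where "f t = (\<lambda>\<pi>. if \<pi> \<in> \<Pi> then c (vecof \<pi> t) else 0)" for t
  define C :: "(rat list \<Rightarrow> nat) set" where
    "C = {\<phi>. \<forall>\<pi>. (\<pi> \<in> \<Pi> \<longrightarrow> \<phi> \<pi> \<in> {0..k}) \<and> (\<pi> \<notin> \<Pi> \<longrightarrow> \<phi> \<pi> = 0)}"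
  have fC: "finite C" unfolding C_def by (rule finite_set_of_finite_funs[OF fin]) simp
  have colf: "\<forall>t\<in>ksub UNIV N. f t \<in> C"
  proof
    fix t assume "t \<in> ksub UNIV N"
    then have "finite t" by (simp add: ksub_def)
    then have "c (vecof \<pi> t) \<in> {1..k}" for \<pi> using col vecof_q by blast
    then show "f t \<in> C" unfolding C_def f_def by auto
  qed
  obtain Z :: "'i set" where Z: "is_beth (3 * N + 1) Z" using beth by blast
  have "|Z| \<le>o |UNIV :: 'i set|" by (rule card_of_mono1) simp
  then have "\<exists>Z :: 'i set. is_beth (3 * N + 1) Z \<and> |Z| \<le>o |UNIV :: 'i set|" using Z by blast
  then have "\<exists>H\<subseteq>UNIV. uncountable H \<and> (\<exists>c. \<forall>t\<in>ksub H N. f t = c)"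
  proof -
    have "\<forall>X (f' :: 'i set \<Rightarrow> rat list \<Rightarrow> nat) C'. finite C' \<longrightarrow> (\<forall>t\<in>ksub X N. f' t \<in> C') \<longrightarrow>
     (\<exists>Z :: 'i set. is_beth (3*N+1) Z \<and> |Z| \<le>o |X| ) \<longrightarrow>
     (\<exists>H\<subseteq>X. uncountable H \<and> (\<exists>c. \<forall>t\<in>ksub H N. f' t = c))" by (rule ramsey)
    then have "finite C \<longrightarrow> (\<forall>t\<in>ksub UNIV N. f t \<in> C) \<longrightarrow>
     (\<exists>Z :: 'i set. is_beth (3*N+1) Z \<and> |Z| \<le>o |UNIV :: 'i set| ) \<longrightarrow>
     (\<exists>H\<subseteq>UNIV. uncountable H \<and> (\<exists>c. \<forall>t\<in>ksub H N. f t = c))" by (rule spec[of _ C, OF spec[of _ f, OF spec[of _ UNIV]]])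
    then show ?thesis using fC colf \<open>\<exists>Z :: 'i set. is_beth (3 * N + 1) Z \<and> |Z| \<le>o |UNIV :: 'i set|\<close> by blast
  qed
  then obtain H L where H: "uncountable H" "\<forall>t\<in>ksub H N. f t = L" by blast
  define H' where "H' = {h \<in> H. \<exists>T. T \<subseteq> H \<and> finite T \<and> card T = N \<and> (\<forall>z\<in>T. lt h z)}"
  have "finite (H - H')"
  proof (rule ccontr)
    assume "infinite (H - H')"
    then obtain F0 where F0: "finite F0" "card F0 = Suc N" "F0 \<subseteq> H - H'"
      using infinite_arbitrarily_large by blast
    then have "F0 \<noteq> {}" by auto
    then obtain h where h: "h \<in> F0" "\<forall>z\<in>F0. z \<noteq> h \<longrightarrow> lt h z" using min_exists F0(1) by blast
    have "F0 - {h} \<subseteq> H" "finite (F0 - {h})" "card (F0 - {h}) = N" "\<forall>z\<in>F0 - {h}. lt h z"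
      using F0 h by auto
    then have "h \<in> H'" unfolding H'_def using h F0 by blast
    then show False using h F0 by blast
  qed
  then have "uncountable (H - (H - H'))" using H(1) uncountable_minus_countable countable_finite by blast
  moreover have "H - (H - H') = H'" unfolding H'_def by auto
  ultimately have "uncountable H'" by simp
  then obtain S where S: "S \<subseteq> H'" "has_card_aleph1 S" using aleph1_sub by blast
  have ltr: "(\<lambda>a b. (a, b) \<in> r \<and> a \<noteq> b) = lt" by (auto simp: lt_def fun_eq_iff)
  have piok: "\<forall>x. x \<in> module.span qscale (basis_vec ` S) \<and> has_pattern r x \<pi> \<longrightarrow> c x = L \<pi>"
    if \<pi>: "\<pi> \<in> \<Pi>" for \<pi>
  proof (intro allI impI)
    fix x assume a: "x \<in> module.span qscale (basis_vec ` S) \<and> has_pattern r x \<pi>"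
    then have "\<exists>as. sorted_wrt lt as \<and> set as = {i. x i \<noteq> 0} \<and> \<pi> = map x as"
      unfolding has_pattern_def ltr by simp
    then obtain as where as: "sorted_wrt lt as" "set as = {i. x i \<noteq> 0}" "\<pi> = map x as"
      by blast
    have asS: "set as \<subseteq> S"
    proof
      fix i assume "i \<in> set as"
      then have "x i \<noteq> 0" using as(2) by auto
      then show "i \<in> S" using span_supp[of x S i] a by blast
    qed
    have ne: "as \<noteq> []" using pat \<pi> as(3) unfolding is_pattern_def by auto
    let ?u = "last as"
    have "?u \<in> H'" using last_in_set[OF ne] asS S(1) by blast
    then obtain T1 where T1: "T1 \<subseteq> H" "finite T1" "card T1 = N" "\<forall>z\<in>T1. lt ?u z"
      unfolding H'_def by blast
    have lp: "length as \<le> N" using lenN[OF \<pi>] as(3) by simp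
    obtain T2 where T2: "T2 \<subseteq> T1" "card T2 = N - length as" "finite T2"
      using obtain_subset_with_card_n[of "N - length as" T1] T1(3) by auto
    define bs where "bs = sl T2"
    have bs: "sorted_wrt lt bs" "set bs = T2" using sl[OF T2(3)] bs_def by auto
    have ule: "a = ?u \<or> lt a ?u" if "a \<in> set as" for a
    proof -
      have "as = butlast as @ [?u]" using ne by simp
      then have "sorted_wrt lt (butlast as @ [?u])" using as(1) by simp
      then have "\<forall>z\<in>set (butlast as). lt z ?u" by (simp add: sorted_wrt_append)
      moreover have "set as = insert ?u (set (butlast as))"
        using ne by (metis \<open>as = butlast as @ [?u]\<close> list.simps(15) set_append Un_commute insert_is_Un set_empty2 empty_set)
      ultimately show ?thesis using that by auto
    qed
    have cross: "lt a b" if "a \<in> set as" "b \<in> set bs" for a b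
    proof -
      have "lt ?u b" using that(2) bs(2) T2(1) T1(4) by blast
      then show ?thesis using ule[OF that(1)] lt_trans by blast
    qed
    have sab: "sorted_wrt lt (as @ bs)"
      unfolding sorted_wrt_append using as(1) bs(1) cross by blast
    define T where "T = set (as @ bs)"
    have slT: "sl T = as @ bs" unfolding T_def by (rule sl_eq[OF sab])
    have dist: "distinct (as @ bs)" using sorted_distinct[OF sab] .
    have "length bs = card T2" using distinct_card[OF sorted_distinct[OF bs(1)]] bs(2) by simp
    then have cardT: "card T = N" unfolding T_def using distinct_card[OF dist] T2(2) lp by simp
    have "H' \<subseteq> H" unfolding H'_def by blast
    then have TH: "T \<subseteq> H" unfolding T_def using asS S(1) bs(2) T2(1) T1(1) by auto
    have "T \<in> ksub H N" unfolding ksub_def using TH cardT T_def by auto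
    then have "f T = L" using H(2) by blast
    moreover have "vecof \<pi> T = x"
    proof
      fix j
      have "zip (as @ bs) \<pi> = zip as (map x as)" using as(3) by (simp add: zip_append1)
      then have "map_of (zip (sl T) \<pi>) j = (if j \<in> set as then Some (x j) else None)"
        using slT map_of_zip_map[of as x j] by simp
      then show "vecof \<pi> T j = x j" unfolding vecof_def using as(2) by auto
    qed
    ultimately show "c x = L \<pi>" unfolding f_def using \<pi> by auto
  qed
  show ?thesis
  proof (intro exI[of _ S] conjI ballI)
    show "has_card_aleph1 S" by (rule S(2))
  next
    fix \<pi> assume "\<pi> \<in> \<Pi>"
    show "\<exists>col. \<forall>x. x \<in> module.span qscale (basis_vec ` S) \<and> has_pattern r x \<pi> \<longrightarrow> c x = col"
      using piok[OF \<open>\<pi> \<in> \<Pi>\<close>] by (rule exI)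
  qed
qed

end

theorem lemma1:
  fixes r :: "'i rel"
    and k :: nat
    and c :: "('i \<Rightarrow> rat) \<Rightarrow> nat"
    and \<Pi> :: "rat list set"
  assumes "has_card_beth_omega (UNIV :: 'i set)"
    and "card_order r"
    and "k > 0"
    and "\<forall>x \<in> qvectors. c x \<in> {1..k}"
    and "finite \<Pi>"
    and "\<forall>\<pi> \<in> \<Pi>. is_pattern \<pi>"
  shows "\<exists>S :: 'i set. has_card_aleph1 S \<and>
           (\<forall>\<pi> \<in> \<Pi>. \<exists>col. \<forall>x.
              x \<in> module.span qscale (basis_vec ` S) \<and> has_pattern r x \<pi> \<longrightarrow> c x = col)"
proof -
  interpret W: wor r by unfold_locales (rule card_order_on_well_order_on[OF assms(2)])
  have "\<forall>n. \<exists>X\<subseteq>(UNIV :: 'i set). is_beth n X" using assms(1) unfolding has_card_beth_omega_def by (rule conjunct1)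
  then have "\<forall>n. \<exists>X :: 'i set. is_beth n X" by blast
  then show ?thesis by (rule W.main[OF _ assms(4) assms(5) assms(6)])
qed


end
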